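(* For each $\varepsilon\in(0,1]$ let $f_\varepsilon\in L^1(\mathbb{R}^d)$, and let $f\in L^1(\mathbb{R}^d)$. Assume all $f_\varepsilon$ and $f$ are nonnegative, continuous, radial and radially nonincreasing, and that $f_\varepsilon\to f$ weakly as $\varepsilon\to0$ (as measures on $\mathbb{R}^d$). Then $f_\varepsilon(x)\to f(x)$ as $\varepsilon\to0$ for every $x\ne0$. *)

theory Defs
  imports "HOL-Analysis.Analysis"
begin

definition radial :: "('a::real_normed_vector \<Rightarrow> real) \<Rightarrow> bool" where
  "radial f \<longleftrightarrow> (\<forall>x y. norm x = norm y \<longrightarrow> f x = f y)"

definition radially_nonincreasing :: "('a::real_normed_vector \<Rightarrow> real) \<Rightarrow> bool" where
  "radially_nonincreasing f \<longleftrightarrow> (\<forall>x y. norm x \<le> norm y \<longrightarrow> f y \<le> f x)"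

definition weak_conv_density ::
  "(real \<Rightarrow> 'a::euclidean_space \<Rightarrow> real) \<Rightarrow> ('a \<Rightarrow> real) \<Rightarrow> bool" where
  "weak_conv_density F f \<longleftrightarrow>
     (\<forall>g::'a \<Rightarrow> real. continuous_on UNIV g \<and> bounded (range g) \<longrightarrow>
        ((\<lambda>e. \<integral>x. F e x * g x \<partial>lborel) \<longlongrightarrow> (\<integral>x. f x * g x \<partial>lborel)) (at_right 0))"

end

theory Submission
  imports Defs
begin

lemma int_prod:
  fixes \<phi> g :: "'a::euclidean_space \<Rightarrow> real"
  assumes "integrable lborel \<phi>" "continuous_on UNIV \<phi>" "continuous_on UNIV g"
    "\<And>y. \<bar>g y\<bar> \<le> B"
  shows "integrable lborel (\<lambda>y. \<phi> y * g y)"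
proof (rule Bochner_Integration.integrable_bound[of _ "\<lambda>y. B * \<phi> y"])
  show "integrable lborel (\<lambda>y. B * \<phi> y)" using assms(1) by simp
  have "continuous_on UNIV (\<lambda>y. \<phi> y * g y)" using assms(2,3) by (intro continuous_intros)
  then show "(\<lambda>y. \<phi> y * g y) \<in> borel_measurable lborel"
    using borel_measurable_continuous_onI by simp
  show "AE x in lborel. norm (\<phi> x * g x) \<le> norm (B * \<phi> x)"
  proof (rule AE_I2)
    fix x
    have "\<bar>\<phi> x\<bar> * \<bar>g x\<bar> \<le> \<bar>\<phi> x\<bar> * B" using assms(4) by (simp add: mult_left_mono)
    moreover have "0 \<le> B" using assms(4)[of x] by linarith
    ultimately show "norm (\<phi> x * g x) \<le> norm (B * \<phi> x)" by (simp add: abs_mult mult.commute)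
  qed
qed

lemma arith_aux: "\<lbrakk>\<bar>(t::real) - (a + b) / 2\<bar> * 4 \<le> b - a\<rbrakk>
     \<Longrightarrow> b - a \<le> max 0 (min (t - a) (b - t)) * 4"
  unfolding abs_le_iff max_def min_def by (auto simp: field_simps)

lemma bump:
  fixes a b :: real
  assumes "0 \<le> a" "a < b"
    and g_def: "g = (\<lambda>y::'a::euclidean_space. max 0 (min (norm y - a) (b - norm y)))"
  shows "continuous_on UNIV g" "\<And>y. \<bar>g y\<bar> \<le> b" "\<And>y. 0 \<le> g y"
    "\<And>y. g y \<noteq> 0 \<Longrightarrow> a < norm y \<and> norm y < b" "bounded (range g)"
    "integrable lborel g" "0 < integral\<^sup>L lborel g"
proof -
  show c: "continuous_on UNIV g" unfolding g_def by (intro continuous_intros)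
  show bd: "\<And>y. \<bar>g y\<bar> \<le> b" unfolding g_def using assms by (auto simp: abs_if)
  show nn: "\<And>y. 0 \<le> g y" unfolding g_def by simp
  show sp: "\<And>y. g y \<noteq> 0 \<Longrightarrow> a < norm y \<and> norm y < b" unfolding g_def by (auto simp: max_def min_def split: if_splits)
  show "bounded (range g)" using bd unfolding bounded_iff by auto
  have eq: "g = (\<lambda>y. indicator (cball 0 b) y *\<^sub>R g y)"
    using sp by (force simp: indicator_def)
  show ig: "integrable lborel g"
    by (subst eq, rule borel_integrable_compact) (auto intro: continuous_on_subset[OF c])
  obtain u :: 'a where u: "u \<in> Basis" using nonempty_Basis by blast
  define m where "m = (a + b) / 2"
  define \<rho> where "\<rho> = (b - a) / 4"
  have \<rho>: "0 < \<rho>" using assms unfolding \<rho>_def by simp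
  define z where "z = m *\<^sub>R u"
  have nz: "norm z = m" using u assms unfolding z_def m_def by simp
  have ge: "\<rho> * indicator (cball z \<rho>) y \<le> g y" for y
  proof (cases "y \<in> cball z \<rho>")
    case True
    then have "\<bar>norm y - m\<bar> \<le> \<rho>" using norm_triangle_ineq3[of y z] nz by (simp add: dist_norm norm_minus_commute)
    then show ?thesis using True unfolding g_def \<rho>_def m_def by (simp add: arith_aux)
  next
    case False then show ?thesis using nn by simp
  qed
  have ii: "integrable lborel (\<lambda>y. \<rho> * indicator (cball z \<rho>) y)"
    by (intro integrable_mult_right integrable_real_indicator) (use emeasure_bounded_finite[of "cball z \<rho>"] in \<open>auto simp: less_top[symmetric]\<close>)
  have "integral\<^sup>L lborel (\<lambda>y. \<rho> * indicator (cball z \<rho>) y) = \<rho> * measure lborel (cball z \<rho>)"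
    by simp
  moreover have "0 < measure lborel (cball z \<rho>)"
    using content_ball_pos[OF \<rho>, of z] content_cball_conv_ball[of z \<rho>] by simp
  moreover have "integral\<^sup>L lborel (\<lambda>y. \<rho> * indicator (cball z \<rho>) y) \<le> integral\<^sup>L lborel g"
    by (rule integral_mono[OF ii ig ge])
  ultimately show "0 < integral\<^sup>L lborel g" using \<rho> by (smt (verit) mult_pos_pos)
qed


theorem lemma2p6:
  fixes F :: "real \<Rightarrow> 'a::euclidean_space \<Rightarrow> real" and f :: "'a \<Rightarrow> real"
  assumes "\<And>e. e \<in> {0<..1} \<Longrightarrow> integrable lborel (F e)"
      and "\<And>e x. e \<in> {0<..1} \<Longrightarrow> F e x \<ge> 0"
      and "\<And>e. e \<in> {0<..1} \<Longrightarrow> continuous_on UNIV (F e)"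
      and "\<And>e. e \<in> {0<..1} \<Longrightarrow> radial (F e)"
      and "\<And>e. e \<in> {0<..1} \<Longrightarrow> radially_nonincreasing (F e)"
      and "integrable lborel f"
      and "\<And>x. f x \<ge> 0"
      and "continuous_on UNIV f"
      and "radial f"
      and "radially_nonincreasing f"
      and "weak_conv_density F f"
  shows "\<forall>x. x \<noteq> 0 \<longrightarrow> ((\<lambda>e. F e x) \<longlongrightarrow> f x) (at_right 0)"
proof (intro allI impI)
  fix x :: 'a assume x0: "x \<noteq> 0"
  note intF = assms(1) and contF = assms(3) and decF = assms(5)[unfolded radially_nonincreasing_def]
  note decf = assms(10)[unfolded radially_nonincreasing_def]
  define r where "r = norm x"
  have r0: "0 < r" using x0 unfolding r_def by simp
  define u where "u = sgn x"
  have nu: "norm u = 1" using x0 unfolding u_def by (simp add: norm_sgn)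
  define h where "h t = f (t *\<^sub>R u)" for t
  have nh: "norm (t *\<^sub>R u) = \<bar>t\<bar>" for t using nu by simp
  have hr: "h r = f x" unfolding h_def using assms(9)[unfolded radial_def, rule_format, of "r *\<^sub>R u" x] nh nu r0 r_def
    by simp
  have hc0: "continuous_on UNIV h" unfolding h_def
    by (rule continuous_on_compose2[OF assms(8)]) (auto intro!: continuous_intros)
  have hc: "isCont h r" using hc0 by (simp add: continuous_on_eq_continuous_at)
  have ev01: "eventually (\<lambda>e. e \<in> {0<..1}) (at_right (0::real))"
    by (rule eventually_mono[OF eventually_at_right_real[of 0 1]]) auto
  have wc: "((\<lambda>e. \<integral>y. F e y * g y \<partial>lborel) \<longlongrightarrow> (\<integral>y. f y * g y \<partial>lborel)) (at_right 0)"
    if "continuous_on UNIV g" "bounded (range g)" for g using assms(11) that unfolding weak_conv_density_def by blast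
  show "((\<lambda>e. F e x) \<longlongrightarrow> f x) (at_right 0)"
  proof (rule tendstoI)
    fix \<delta> :: real assume \<delta>: "0 < \<delta>"
    define d where "d = \<delta> / 3"
    have d: "0 < d" using \<delta> unfolding d_def by simp
    obtain \<eta> where \<eta>: "\<eta> > 0" "\<And>t. dist t r < \<eta> \<Longrightarrow> dist (h t) (h r) < d"
      using hc d unfolding continuous_at_eps_delta by blast
    have up: "eventually (\<lambda>e. F e x < f x + 3 * d) (at_right 0)"
    proof -
      define a where "a = max (r/2) (r - \<eta>/2)"
      have a: "0 \<le> a" "a < r" "dist a r < \<eta>" using r0 \<eta> unfolding a_def dist_real_def by auto
      define g where "g = (\<lambda>y::'a. max 0 (min (norm y - a) (r - norm y)))"
      note B = bump[OF a(1,2) g_def]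
      define G where "G = integral\<^sup>L lborel g"
      have G: "0 < G" using B(7) unfolding G_def .
      have fg: "f y * g y \<le> (f x + d) * g y" for y
      proof (cases "g y = 0")
        case False
        then have "a \<le> norm y" using B(4) by force
        then have "f y \<le> h a" unfolding h_def using decf[rule_format, of "a *\<^sub>R u" y] nu a by simp
        also have "h a < f x + d" using \<eta>(2)[OF a(3)] hr by (simp add: dist_real_def)
        finally show ?thesis using B(3)[of y] by (intro mult_right_mono) auto
      qed simp
      have J: "integral\<^sup>L lborel (\<lambda>y. f y * g y) \<le> (f x + d) * G"
        unfolding G_def
        by (subst integral_mult_right_zero[symmetric], rule integral_mono)
          (auto intro: int_prod[OF assms(6,8) B(1,2)] B(6) fg)
      have ev: "eventually (\<lambda>e. integral\<^sup>L lborel (\<lambda>y. F e y * g y) < integral\<^sup>L lborel (\<lambda>y. f y * g y) + d * G) (at_right 0)"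
        using order_tendstoD(2)[OF wc[OF B(1,5)], of "integral\<^sup>L lborel (\<lambda>y. f y * g y) + d * G"] d G by simp
      show ?thesis using ev ev01
      proof eventually_elim
        case (elim e)
        show ?case
        proof (rule ccontr)
          assume "\<not> F e x < f x + 3 * d"
          then have c: "f x + 3 * d \<le> F e x" by simp
          have "F e y * g y \<ge> (f x + 3 * d) * g y" for y
          proof (cases "g y = 0")
            case False
            then have "norm y \<le> r" using B(4) by force
            then have "F e x \<le> F e y" using decF[OF elim(2)] r_def by simp
            then show ?thesis using c B(3)[of y] by (intro mult_right_mono) auto
          qed simp
          then have "(f x + 3 * d) * G \<le> integral\<^sup>L lborel (\<lambda>y. F e y * g y)"
            unfolding G_def
            by (subst integral_mult_right_zero[symmetric], intro integral_mono)
              (auto intro: int_prod[OF intF[OF elim(2)] contF[OF elim(2)] B(1,2)] B(6))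
          then show False using elim(1) J d G by (smt (verit) mult_pos_pos distrib_right)
        qed
      qed
    qed
    have lo: "eventually (\<lambda>e. f x - 3 * d < F e x) (at_right 0)"
    proof -
      define b where "b = r + \<eta>/2"
      have b: "0 \<le> r" "r < b" "dist b r < \<eta>" using r0 \<eta> unfolding b_def dist_real_def by auto
      define g where "g = (\<lambda>y::'a. max 0 (min (norm y - r) (b - norm y)))"
      note B = bump[OF b(1,2) g_def]
      define G where "G = integral\<^sup>L lborel g"
      have G: "0 < G" using B(7) unfolding G_def .
      have fg: "(f x - d) * g y \<le> f y * g y" for y
      proof (cases "g y = 0")
        case False
        then have "norm y \<le> b" using B(4) by force
        then have "h b \<le> f y" unfolding h_def using decf[rule_format, of y "b *\<^sub>R u"] nu b r0 by simp
        moreover have "f x - d < h b" using \<eta>(2)[OF b(3)] hr by (simp add: dist_real_def)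
        ultimately show ?thesis using B(3)[of y] by (intro mult_right_mono) auto
      qed simp
      have J: "(f x - d) * G \<le> integral\<^sup>L lborel (\<lambda>y. f y * g y)"
        unfolding G_def
        by (subst integral_mult_right_zero[symmetric], rule integral_mono)
          (auto intro: int_prod[OF assms(6,8) B(1,2)] B(6) fg)
      have ev: "eventually (\<lambda>e. integral\<^sup>L lborel (\<lambda>y. f y * g y) - d * G < integral\<^sup>L lborel (\<lambda>y. F e y * g y)) (at_right 0)"
        using order_tendstoD(1)[OF wc[OF B(1,5)], of "integral\<^sup>L lborel (\<lambda>y. f y * g y) - d * G"] d G by simp
      show ?thesis using ev ev01
      proof eventually_elim
        case (elim e)
        show ?case
        proof (rule ccontr)
          assume "\<not> f x - 3 * d < F e x"
          then have c: "F e x \<le> f x - 3 * d" by simp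
          have "F e y * g y \<le> (f x - 3 * d) * g y" for y
          proof (cases "g y = 0")
            case False
            then have "r \<le> norm y" using B(4) by force
            then have "F e y \<le> F e x" using decF[OF elim(2)] r_def by simp
            then show ?thesis using c B(3)[of y] by (intro mult_right_mono) auto
          qed simp
          then have "integral\<^sup>L lborel (\<lambda>y. F e y * g y) \<le> (f x - 3 * d) * G"
            unfolding G_def
            by (subst integral_mult_right_zero[symmetric], intro integral_mono)
              (auto intro: int_prod[OF intF[OF elim(2)] contF[OF elim(2)] B(1,2)] B(6))
          then show False using elim(1) J d G by (smt (verit) mult_pos_pos distrib_right)
        qed
      qed
    qed
    show "eventually (\<lambda>e. dist (F e x) (f x) < \<delta>) (at_right 0)"
      using up lo by eventually_elim (auto simp: dist_real_def d_def)
  qed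
qed

end
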